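(* The orbit space $\mathbb{R}P^5/\mathbb{Z}_2^4$ is homeomorphic to the join $S^2\ast\mathbb{R}P^2$.
   Context: The group $\mathbb{Z}_2^4=\{\pm1\}^4$ acts on $\mathbb{R}P^5$, with homogeneous coordinates $[x_{12}:x_{13}:x_{14}:x_{23}:x_{24}:x_{34}]$, by $x_{ij}\mapsto\epsilon_i\epsilon_jx_{ij}$, i.e. via the composition of the second symmetric power $\mathbb{Z}_2^4\to\mathbb{Z}_2^6$ with the canonical coordinatewise action of $\mathbb{Z}_2^6$ on $\mathbb{R}P^5$. *)

theory Defs
  imports "HOL-Analysis.Analysis"
begin

definition quotient_topology :: "'a topology \<Rightarrow> ('a \<Rightarrow> 'b) \<Rightarrow> 'b topology" where
  "quotient_topology X f =
     topology (\<lambda>U. U \<subseteq> f ` topspace X \<and> openin X {x \<in> topspace X. f x \<in> U})"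

lemma istopology_quotient:
  "istopology (\<lambda>U. U \<subseteq> f ` topspace X \<and> openin X {x \<in> topspace X. f x \<in> U})"
proof -
  have "openin X ({x \<in> topspace X. f x \<in> S} \<inter> {x \<in> topspace X. f x \<in> T})"
    if "openin X {x \<in> topspace X. f x \<in> S}" "openin X {x \<in> topspace X. f x \<in> T}" for S T
    using that by blast
  moreover have "{x \<in> topspace X. f x \<in> S \<inter> T} =
      {x \<in> topspace X. f x \<in> S} \<inter> {x \<in> topspace X. f x \<in> T}" for S T by blast
  moreover have "{x \<in> topspace X. f x \<in> \<Union>K} = (\<Union>U\<in>K. {x \<in> topspace X. f x \<in> U})" for K
    by blast
  ultimately show ?thesis
    unfolding istopology_def by (auto intro!: openin_Union)
qed

lemma openin_quotient_topology:
  "openin (quotient_topology X f) U \<longleftrightarrow>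
     U \<subseteq> f ` topspace X \<and> openin X {x \<in> topspace X. f x \<in> U}"
  unfolding quotient_topology_def using istopology_quotient[of f X]
  by (simp add: topology_inverse')

definition projective_space :: "('a::real_normed_vector) set topology" where
  "projective_space = quotient_topology (top_of_set (UNIV - {0})) (\<lambda>x. {c *\<^sub>R x | c. c \<noteq> 0})"

definition orbit_space :: "'a topology \<Rightarrow> ('g \<Rightarrow> 'a \<Rightarrow> 'a) \<Rightarrow> 'g set \<Rightarrow> 'a set topology" where
  "orbit_space X act G = quotient_topology X (\<lambda>p. {act g p | g. g \<in> G})"

definition join_class :: "'a topology \<Rightarrow> 'b topology \<Rightarrow> 'a \<times> 'b \<times> real \<Rightarrow> ('a \<times> 'b \<times> real) set" where
  "join_class X Y p = (case p of (x, y, t) \<Rightarrow>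
      if t = 0 then {(x, y', 0) | y'. y' \<in> topspace Y}
      else if t = 1 then {(x', y, 1) | x'. x' \<in> topspace X}
      else {(x, y, t)})"

definition join_space :: "'a topology \<Rightarrow> 'b topology \<Rightarrow> ('a \<times> 'b \<times> real) set topology" where
  "join_space X Y = quotient_topology (prod_topology X (prod_topology Y (top_of_set {0..1})))
                                      (join_class X Y)"

datatype pair6 = P12 | P13 | P14 | P23 | P24 | P34

lemma UNIV_pair6: "(UNIV :: pair6 set) = {P12, P13, P14, P23, P24, P34}"
  using pair6.exhaust by auto

instance pair6 :: finite
  by standard (simp add: UNIV_pair6)

fun pair_idx :: "pair6 \<Rightarrow> nat \<times> nat" where
  "pair_idx P12 = (1, 2)" | "pair_idx P13 = (1, 3)" | "pair_idx P14 = (1, 4)"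
| "pair_idx P23 = (2, 3)" | "pair_idx P24 = (2, 4)" | "pair_idx P34 = (3, 4)"

definition Z2_4 :: "(nat \<Rightarrow> real) set" where
  "Z2_4 = {\<epsilon>. \<forall>i \<in> {1..4}. \<epsilon> i = 1 \<or> \<epsilon> i = -1}"

definition sym2_sign :: "(nat \<Rightarrow> real) \<Rightarrow> real^pair6 \<Rightarrow> real^pair6" where
  "sym2_sign \<epsilon> x = (\<chi> k. \<epsilon> (fst (pair_idx k)) * \<epsilon> (snd (pair_idx k)) * x $ k)"

definition RP5_action :: "(nat \<Rightarrow> real) \<Rightarrow> (real^pair6) set \<Rightarrow> (real^pair6) set" where
  "RP5_action \<epsilon> L = sym2_sign \<epsilon> ` L"

end

theory Submission
  imports Defs
begin



lemma topspace_quotient: "topspace (quotient_topology X f) = f ` topspace X"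
proof -
  have o: "openin (quotient_topology X f) (f ` topspace X)"
  proof -
    have "{x \<in> topspace X. f x \<in> f ` topspace X} = topspace X" by auto
    then show ?thesis by (simp add: openin_quotient_topology)
  qed
  have "U \<subseteq> f ` topspace X" if "openin (quotient_topology X f) U" for U
    using that by (simp add: openin_quotient_topology)
  then have "topspace (quotient_topology X f) \<subseteq> f ` topspace X"
    using openin_topspace by blast
  then show ?thesis using o openin_subset by (metis subset_antisym)
qed

lemma cont_quot:
  assumes "continuous_map X Y g" "\<And>x. x \<in> topspace X \<Longrightarrow> k (f x) = g x"
  shows "continuous_map (quotient_topology X f) Y k"
  unfolding continuous_map_def topspace_quotient
proof (intro conjI allI impI)
  show "k \<in> f ` topspace X \<rightarrow> topspace Y"
    using assms continuous_map_image_subset_topspace by fastforce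
  fix U assume U: "openin Y U"
  have "{x \<in> topspace X. f x \<in> {y \<in> f ` topspace X. k y \<in> U}} = {x \<in> topspace X. g x \<in> U}"
  proof (rule Collect_cong)
    fix x
    show "(x \<in> topspace X \<and> f x \<in> {y \<in> f ` topspace X. k y \<in> U}) = (x \<in> topspace X \<and> g x \<in> U)"
    proof (cases "x \<in> topspace X")
      case True
      then have "f x \<in> f ` topspace X" by (rule imageI)
      with True assms(2)[OF True] show ?thesis by simp
    qed simp
  qed
  moreover have "openin X {x \<in> topspace X. g x \<in> U}"
    using assms(1) U by (rule openin_continuous_map_preimage)
  ultimately show "openin (quotient_topology X f) {y \<in> f ` topspace X. k y \<in> U}"
    by (simp add: openin_quotient_topology)
qed

lemma quot_map_cont: "continuous_map X (quotient_topology X f) f"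
  unfolding continuous_map_def topspace_quotient
proof (intro conjI allI impI)
  show "f \<in> topspace X \<rightarrow> f ` topspace X" by auto
  fix U assume "openin (quotient_topology X f) U"
  then show "openin X {x \<in> topspace X. f x \<in> U}" by (simp add: openin_quotient_topology)
qed

lemma compact_quot: "compact_space X \<Longrightarrow> compact_space (quotient_topology X f)"
  by (metis compact_space_def image_compactin quot_map_cont topspace_quotient)




lemma forall_pair6: "(\<forall>k. P k) \<longleftrightarrow> P P12 \<and> P P13 \<and> P P14 \<and> P P23 \<and> P P24 \<and> P P34"
  by (metis pair6.exhaust)

lemma vec6_eq: "(x::'a^pair6) = y \<longleftrightarrow> x$P12 = y$P12 \<and> x$P13 = y$P13 \<and> x$P14 = y$P14 \<and>
   x$P23 = y$P23 \<and> x$P24 = y$P24 \<and> x$P34 = y$P34"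
  by (simp add: vec_eq_iff forall_pair6)

lemma sym2_comp: "sym2_sign g (sym2_sign e x) = sym2_sign (\<lambda>i. g i * e i) x"
  by (simp add: vec6_eq sym2_sign_def)

lemma sym2_scale: "sym2_sign e (c *\<^sub>R x) = c *\<^sub>R sym2_sign e x"
  by (simp add: vec6_eq sym2_sign_def)

lemma sym2_one: "sym2_sign (\<lambda>_. 1) x = x"
  by (simp add: vec6_eq sym2_sign_def)

lemma Z2_4D: "e \<in> Z2_4 \<Longrightarrow> i \<in> {1..4} \<Longrightarrow> e i * e i = 1"
proof -
  assume "e \<in> Z2_4" "i \<in> {1..4}"
  then have "e i = 1 \<or> e i = -1" unfolding Z2_4_def by blast
  then show ?thesis by auto
qed

lemma one_Z2_4: "(\<lambda>_. 1) \<in> Z2_4" by (simp add: Z2_4_def)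

lemma mult_Z2_4: "g \<in> Z2_4 \<Longrightarrow> e \<in> Z2_4 \<Longrightarrow> (\<lambda>i. g i * e i) \<in> Z2_4"
  unfolding Z2_4_def
proof (intro CollectI ballI)
  fix i :: nat assume "g \<in> {\<epsilon>. \<forall>i\<in>{1..4}. \<epsilon> i = 1 \<or> \<epsilon> i = - 1}" "e \<in> {\<epsilon>. \<forall>i\<in>{1..4}. \<epsilon> i = 1 \<or> \<epsilon> i = - 1}" "i \<in> {1..4}"
  then have "g i = 1 \<or> g i = -1" "e i = 1 \<or> e i = -1" by blast+
  then show "g i * e i = 1 \<or> g i * e i = - 1" by auto
qed

lemma pair_idx_range: "fst (pair_idx k) \<in> {1..4} \<and> snd (pair_idx k) \<in> {1..4}"
  by (cases k) auto

lemma sym2_cancel: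
  assumes "e \<in> Z2_4"
  shows "sym2_sign (\<lambda>i. g i * e i) (sym2_sign e x) = sym2_sign g x"
proof (subst vec_eq_iff, rule allI)
  fix k
  have a: "g a * e a * (g b * e b) * (e a * e b * y) = g a * g b * y"
    if "e a * e a = 1" "e b * e b = 1" for a b y
  proof -
    have "g a * e a * (g b * e b) * (e a * e b * y) = g a * g b * y * (e a * e a) * (e b * e b)"
      by (simp add: algebra_simps)
    then show ?thesis using that by simp
  qed
  have "e (fst (pair_idx k)) * e (fst (pair_idx k)) = 1" "e (snd (pair_idx k)) * e (snd (pair_idx k)) = 1"
    using Z2_4D[OF assms] pair_idx_range by blast+
  then show "sym2_sign (\<lambda>i. g i * e i) (sym2_sign e x) $ k = sym2_sign g x $ k"
    unfolding sym2_sign_def by (simp only: vec_lambda_beta) (rule a)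
qed




definition qL :: "'a::real_normed_vector \<Rightarrow> 'a set" where "qL x = {c *\<^sub>R x | c. c \<noteq> 0}"

lemma proj_eq: "projective_space = quotient_topology (top_of_set (UNIV - {0})) qL"
  unfolding projective_space_def qL_def ..

lemma topspace_proj: "topspace projective_space = qL ` (UNIV - {0})"
  by (simp add: proj_eq topspace_quotient)

lemma qL_scale: "c \<noteq> 0 \<Longrightarrow> qL (c *\<^sub>R x) = qL x"
  unfolding qL_def
proof (intro set_eqI iffI)
  fix y assume "c \<noteq> 0" "y \<in> {d *\<^sub>R c *\<^sub>R x |d. d \<noteq> 0}"
  then obtain d where "d \<noteq> 0" "y = d *\<^sub>R c *\<^sub>R x" by blast
  then show "y \<in> {c *\<^sub>R x |c. c \<noteq> 0}" using \<open>c \<noteq> 0\<close> by auto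
next
  fix y assume "c \<noteq> 0" "y \<in> {c *\<^sub>R x |c. c \<noteq> 0}"
  then obtain d where "d \<noteq> 0" "y = d *\<^sub>R x" by blast
  then have "y = (d / c) *\<^sub>R c *\<^sub>R x" using \<open>c \<noteq> 0\<close> by simp
  moreover have "d / c \<noteq> 0" using \<open>c \<noteq> 0\<close> \<open>d \<noteq> 0\<close> by simp
  ultimately show "y \<in> {d *\<^sub>R c *\<^sub>R x |d. d \<noteq> 0}" by blast
qed

lemma qL_self: "x \<in> qL x"
  unfolding qL_def by (metis (mono_tags, lifting) mem_Collect_eq one_neq_zero scaleR_one)

lemma qL_mem: "y \<in> qL x \<Longrightarrow> \<exists>c. c \<noteq> 0 \<and> y = c *\<^sub>R x"
  unfolding qL_def by blast

lemma compact_proj: "compact_space (projective_space :: ('a::euclidean_space) set topology)"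
proof -
  have c1: "continuous_map (top_of_set (sphere (0::'a) 1)) (top_of_set (UNIV - {0})) id"
    by (auto simp: continuous_map_in_subtopology continuous_map_from_subtopology)
  have cm: "continuous_map (top_of_set (sphere (0::'a) 1)) projective_space qL"
    using continuous_map_compose[OF c1 quot_map_cont[of "top_of_set (UNIV - {0::'a})" qL]]
    by (simp add: proj_eq o_def)
  have "compactin (top_of_set (sphere (0::'a) 1)) (sphere 0 1)"
    by (simp add: compactin_subtopology)
  then have "compactin projective_space (qL ` sphere (0::'a) 1)"
    using cm by (rule image_compactin)
  moreover have "qL ` sphere (0::'a) 1 = qL ` (UNIV - {0})"
  proof (intro set_eqI iffI)
    fix L assume "L \<in> qL ` (UNIV - {0::'a})"
    then obtain x where x: "x \<noteq> 0" "L = qL x" by blast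
    then have "L = qL ((1 / norm x) *\<^sub>R x)" by (simp add: qL_scale)
    moreover have "(1 / norm x) *\<^sub>R x \<in> sphere 0 1" using x by simp
    ultimately show "L \<in> qL ` sphere (0::'a) 1" by blast
  qed auto
  ultimately show ?thesis by (simp add: compact_space_def topspace_proj)
qed

definition orb :: "(real^pair6) set \<Rightarrow> (real^pair6) set set" where
  "orb L = {RP5_action g L | g. g \<in> Z2_4}"

lemma orbit_eq: "orbit_space projective_space RP5_action Z2_4 = quotient_topology projective_space orb"
  unfolding orbit_space_def orb_def ..

lemma act_comp: "RP5_action g (RP5_action e L) = RP5_action (\<lambda>i. g i * e i) L"
  unfolding RP5_action_def image_image sym2_comp ..

lemma orb_act: assumes "e \<in> Z2_4" shows "orb (RP5_action e L) = orb L"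
proof (intro set_eqI iffI)
  fix M assume "M \<in> orb (RP5_action e L)"
  then obtain g where "g \<in> Z2_4" "M = RP5_action g (RP5_action e L)" unfolding orb_def by blast
  then show "M \<in> orb L" unfolding orb_def act_comp using mult_Z2_4 assms by blast
next
  fix M assume "M \<in> orb L"
  then obtain g where g: "g \<in> Z2_4" "M = RP5_action g L" unfolding orb_def by blast
  have "M = RP5_action (\<lambda>i. g i * e i) (RP5_action e L)"
    unfolding g RP5_action_def image_image sym2_cancel[OF assms] ..
  then show "M \<in> orb (RP5_action e L)" unfolding orb_def using mult_Z2_4 assms g by blast
qed

lemma act_qL: "RP5_action e (qL x) = qL (sym2_sign e x)"
proof (intro set_eqI iffI)
  fix y assume "y \<in> RP5_action e (qL x)"
  then obtain c where "c \<noteq> 0" "y = sym2_sign e (c *\<^sub>R x)" unfolding RP5_action_def qL_def by blast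
  then show "y \<in> qL (sym2_sign e x)" unfolding qL_def by (auto simp: sym2_scale)
next
  fix y assume "y \<in> qL (sym2_sign e x)"
  then obtain c where c: "c \<noteq> 0" "y = c *\<^sub>R sym2_sign e x" unfolding qL_def by blast
  then have "y = sym2_sign e (c *\<^sub>R x)" by (simp add: sym2_scale)
  moreover have "c *\<^sub>R x \<in> qL x" using c unfolding qL_def by blast
  ultimately show "y \<in> RP5_action e (qL x)" unfolding RP5_action_def by blast
qed

lemma orb_self: "L \<in> orb L"
proof -
  have "RP5_action (\<lambda>_. 1) L = L" unfolding RP5_action_def by (simp add: sym2_one)
  then show ?thesis unfolding orb_def using one_Z2_4 by force
qed




definition Uf :: "real^pair6 \<Rightarrow> real^3" where
  "Uf x = vector [2*x$P12*x$P34, 2*x$P13*x$P24, 2*x$P14*x$P23]"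
definition Vf :: "real^pair6 \<Rightarrow> real^3" where
  "Vf x = vector [(x$P12)^2-(x$P34)^2, (x$P13)^2-(x$P24)^2, (x$P14)^2-(x$P23)^2]"
definition Nf :: "real^pair6 \<Rightarrow> real" where
  "Nf x = (norm (Uf x))^2 + (norm (Vf x))^2"
definition outer :: "real^'n \<Rightarrow> real^'n^'n" where
  "outer u = (\<chi> i j. u$i * u$j)"
definition phi :: "real^pair6 \<Rightarrow> (real^3) \<times> (real^3^3)" where
  "phi x = ((norm (Vf x) / Nf x) *\<^sub>R Vf x, (1 / Nf x) *\<^sub>R outer (Uf x))"

lemma norm3: "(norm (v::real^3))^2 = (v$1)^2 + (v$2)^2 + (v$3)^2"
  unfolding power2_norm_eq_inner inner_vec_def sum_3 inner_real_def by (simp add: power2_eq_square)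

lemma Uf_scale: "Uf (c *\<^sub>R x) = c^2 *\<^sub>R Uf x"
  by (simp add: Uf_def vec_eq_iff forall_3 power2_eq_square algebra_simps)

lemma Vf_scale: "Vf (c *\<^sub>R x) = c^2 *\<^sub>R Vf x"
  by (simp add: Vf_def vec_eq_iff forall_3 power2_eq_square algebra_simps)

lemma Nf_scale: "Nf (c *\<^sub>R x) = c^4 * Nf x"
proof -
  have "Nf (c *\<^sub>R x) = (c^2)^2 * Nf x"
    by (simp add: Nf_def Uf_scale Vf_scale power_mult_distrib algebra_simps)
  then show ?thesis by (simp add: power_mult[symmetric])
qed

lemma outer_scale: "outer (a *\<^sub>R u) = a^2 *\<^sub>R outer u"
  by (simp add: outer_def vec_eq_iff power2_eq_square algebra_simps)

lemma phi_scale: assumes "c \<noteq> 0" shows "phi (c *\<^sub>R x) = phi x"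
proof -
  have c2: "c^2 > 0" using assms by simp
  have "c^4 = c^2 * c^2" by algebra
  then show ?thesis using c2
    by (simp add: phi_def Uf_scale Vf_scale Nf_scale outer_scale field_simps)
qed

lemma Uf_sym: "Uf (sym2_sign e x) = (e 1 * e 2 * e 3 * e 4) *\<^sub>R Uf x"
  by (simp add: Uf_def sym2_sign_def vec_eq_iff forall_3 algebra_simps)

lemma Vf_sym: assumes "e \<in> Z2_4" shows "Vf (sym2_sign e x) = Vf x"
proof -
  have E: "e 1 * e 1 = 1" "e 2 * e 2 = 1" "e 3 * e 3 = 1" "e 4 * e 4 = 1"
    using Z2_4D[OF assms] by auto
  have a: "(e a * e b * y)^2 = y^2" if "e a * e a = 1" "e b * e b = 1" for a b y
  proof -
    have "(e a * e b * y)^2 = (e a * e a) * (e b * e b) * y^2" by algebra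
    then show ?thesis using that by simp
  qed
  show ?thesis
    unfolding Vf_def sym2_sign_def
    by (simp only: vec_lambda_beta pair_idx.simps fst_conv snd_conv a[OF E(1) E(2)] a[OF E(1) E(3)]
         a[OF E(1) E(4)] a[OF E(2) E(3)] a[OF E(2) E(4)] a[OF E(3) E(4)])
qed

lemma phi_sym: assumes "e \<in> Z2_4" shows "phi (sym2_sign e x) = phi x"
proof -
  define s where "s = e 1 * e 2 * e 3 * e 4"
  have E: "e 1 * e 1 = 1" "e 2 * e 2 = 1" "e 3 * e 3 = 1" "e 4 * e 4 = 1"
    using Z2_4D[OF assms] by auto
  have "s^2 = (e 1 * e 1) * (e 2 * e 2) * (e 3 * e 3) * (e 4 * e 4)" unfolding s_def by algebra
  then have s2: "s^2 = 1" using E by simp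
  then have "s = 1 \<or> s = -1" by (simp add: power2_eq_1_iff)
  then have as: "\<bar>s\<bar> = 1" by auto
  have "Nf (sym2_sign e x) = Nf x"
    unfolding Nf_def Uf_sym Vf_sym[OF assms] s_def[symmetric] using as by simp
  then show ?thesis
    unfolding phi_def Uf_sym Vf_sym[OF assms] s_def[symmetric] outer_scale s2 by simp
qed

lemma Nf_expand: "Nf x = ((x$P12)^2+(x$P34)^2)^2 + ((x$P13)^2+(x$P24)^2)^2 + ((x$P14)^2+(x$P23)^2)^2"
  unfolding Nf_def norm3 Uf_def Vf_def by (simp add: power2_eq_square algebra_simps)

lemma Nf_pos: assumes "x \<noteq> 0" shows "Nf x > 0"
proof -
  have nn: "0 \<le> ((x$P12)^2+(x$P34)^2)^2" "0 \<le> ((x$P13)^2+(x$P24)^2)^2" "0 \<le> ((x$P14)^2+(x$P23)^2)^2"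
    by simp_all
  from assms have "x$P12 \<noteq> 0 \<or> x$P13 \<noteq> 0 \<or> x$P14 \<noteq> 0 \<or> x$P23 \<noteq> 0 \<or> x$P24 \<noteq> 0 \<or> x$P34 \<noteq> 0"
    by (simp add: vec6_eq)
  then have "0 < ((x$P12)^2+(x$P34)^2)^2 \<or> 0 < ((x$P13)^2+(x$P24)^2)^2 \<or> 0 < ((x$P14)^2+(x$P23)^2)^2"
    by (auto simp: add_pos_nonneg add_nonneg_pos)
  then show ?thesis unfolding Nf_expand using nn by linarith
qed




lemma pair_lemma:
  fixes p q p' q' s :: real
  assumes s: "s = 1 \<or> s = -1" and m: "p' * q' = s * (p * q)" and d: "p'^2 - q'^2 = p^2 - q^2"
  shows "\<exists>a. (a = 1 \<or> a = -1) \<and> p' = a * p \<and> q' = s * a * q"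
proof -
  have s2: "s * s = 1" using s by auto
  have "(p'^2 + q'^2)^2 = (p'^2 - q'^2)^2 + 4 * (p' * q')^2" by algebra
  also have "\<dots> = (p^2 - q^2)^2 + 4 * (s * s) * (p * q)^2" unfolding d m by algebra
  also have "\<dots> = (p^2 + q^2)^2" unfolding s2 by algebra
  finally have "p'^2 + q'^2 = p^2 + q^2"
    by (rule power2_eq_imp_eq) simp_all
  with d have sq: "p'^2 = p^2" "q'^2 = q^2" by linarith+
  then have pp: "p' = p \<or> p' = -p" and qq: "q' = q \<or> q' = -q"
    by (simp_all add: power2_eq_iff)
  show ?thesis
  proof (cases "p = 0")
    case True
    then have "p' = 0" using pp by auto
    from qq show ?thesis
    proof
      assume "q' = q" then show ?thesis
        using \<open>p' = 0\<close> True s2 s by (intro exI[of _ s]) auto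
    next
      assume "q' = -q" then show ?thesis
        using \<open>p' = 0\<close> True s2 s by (intro exI[of _ "-s"]) auto
    qed
  next
    case False
    from pp show ?thesis
    proof
      assume p1: "p' = p"
      then have "p * q' = p * (s * q)" using m by simp
      then have "q' = s * 1 * q" using False by simp
      then show ?thesis using p1 by (intro exI[of _ 1]) auto
    next
      assume p1: "p' = -p"
      then have "p * q' = p * (- s * q)" using m by (simp add: algebra_simps)
      then have "q' = - s * q" using False by (metis mult_left_cancel)
      then have "q' = s * (-1) * q" by simp
      then show ?thesis using p1 by (intro exI[of _ "-1"]) auto
    qed
  qed
qed

lemma outer_inj:
  fixes u v :: "real^'n"
  assumes "outer u = outer v"
  shows "v = u \<or> v = -u"
proof -
  have uv: "u$i * u$j = v$i * v$j" for i j
    using assms unfolding outer_def vec_eq_iff by simp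
  show ?thesis
  proof (cases "u = 0")
    case True
    then have "v$i * v$i = 0" for i using uv[of i i] by simp
    then have "v = 0" by (simp add: vec_eq_iff)
    with True show ?thesis by simp
  next
    case False
    then obtain k where k: "u$k \<noteq> 0" by (auto simp: vec_eq_iff)
    have "(v$k)^2 = (u$k)^2" using uv[of k k] by (simp add: power2_eq_square)
    then have "v$k = u$k \<or> v$k = - u$k" by (simp add: power2_eq_iff)
    then show ?thesis
    proof
      assume h: "v$k = u$k"
      have "v$j = u$j" for j
      proof -
        have "u$k * u$j = u$k * v$j" using uv[of k j] h by simp
        then show ?thesis using k by simp
      qed
      then show ?thesis by (simp add: vec_eq_iff)
    next
      assume h: "v$k = - u$k"
      have "v$j = - u$j" for j
      proof -
        have "u$k * (v$j + u$j) = 0" using uv[of k j] h by (simp add: algebra_simps)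
        then have "v$j + u$j = 0" using k by simp
        then show ?thesis by linarith
      qed
      then show ?thesis by (simp add: vec_eq_iff)
    qed
  qed
qed

lemma normV_inj:
  fixes v w :: "real^'n"
  assumes "norm v *\<^sub>R v = norm w *\<^sub>R w"
  shows "v = w"
proof -
  have "norm v * norm v = norm w * norm w"
    using arg_cong[OF assms, of norm] by simp
  then have n: "norm v = norm w" by (metis norm_ge_zero mult_right_mono abs_of_nonneg real_sqrt_abs2 real_sqrt_mult_self)
  show ?thesis
  proof (cases "norm v = 0")
    case True then show ?thesis using n by simp
  next
    case False then show ?thesis using assms n by simp
  qed
qed




lemma phi_inj1:
  assumes N: "Nf x = 1" "Nf x' = 1" and eq: "phi x = phi x'"
  shows "\<exists>e\<in>Z2_4. \<exists>c. c \<noteq> 0 \<and> x' = c *\<^sub>R sym2_sign e x"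
proof -
  from eq N have fe: "norm (Vf x) *\<^sub>R Vf x = norm (Vf x') *\<^sub>R Vf x'" and se: "outer (Uf x) = outer (Uf x')"
    unfolding phi_def by simp_all
  from normV_inj[OF fe] have V: "Vf x = Vf x'" .
  from outer_inj[OF se] obtain s where s: "s = 1 \<or> s = -1" and U: "Uf x' = s *\<^sub>R Uf x"
    by (metis scaleR_minus1_left scaleR_one)
  have m1: "x'$P12 * x'$P34 = s * (x$P12 * x$P34)"
    using arg_cong[OF U, of "\<lambda>v. v$1"] by (simp add: Uf_def)
  have m2: "x'$P13 * x'$P24 = s * (x$P13 * x$P24)"
    using arg_cong[OF U, of "\<lambda>v. v$2"] by (simp add: Uf_def)
  have m3: "x'$P14 * x'$P23 = s * (x$P14 * x$P23)"
    using arg_cong[OF U, of "\<lambda>v. v$3"] by (simp add: Uf_def)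
  have d1: "(x'$P12)^2 - (x'$P34)^2 = (x$P12)^2 - (x$P34)^2"
    using arg_cong[OF V, of "\<lambda>v. v$1"] by (simp add: Vf_def)
  have d2: "(x'$P13)^2 - (x'$P24)^2 = (x$P13)^2 - (x$P24)^2"
    using arg_cong[OF V, of "\<lambda>v. v$2"] by (simp add: Vf_def)
  have d3: "(x'$P14)^2 - (x'$P23)^2 = (x$P14)^2 - (x$P23)^2"
    using arg_cong[OF V, of "\<lambda>v. v$3"] by (simp add: Vf_def)
  obtain a1 where a1: "a1 = 1 \<or> a1 = -1" "x'$P12 = a1 * x$P12" "x'$P34 = s * a1 * x$P34"
    using pair_lemma[OF s m1 d1] by blast
  obtain a2 where a2: "a2 = 1 \<or> a2 = -1" "x'$P13 = a2 * x$P13" "x'$P24 = s * a2 * x$P24"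
    using pair_lemma[OF s m2 d2] by blast
  obtain a3 where a3: "a3 = 1 \<or> a3 = -1" "x'$P14 = a3 * x$P14" "x'$P23 = s * a3 * x$P23"
    using pair_lemma[OF s m3 d3] by blast
  define k where "k = s * a1 * a2 * a3"
  define e :: "nat \<Rightarrow> real" where
    "e = (\<lambda>i. if i = 1 then 1 else if i = 2 then k * a1 else if i = 3 then k * a2 else k * a3)"
  have k: "k = 1 \<or> k = -1" unfolding k_def using s a1(1) a2(1) a3(1) by auto
  have eZ: "e \<in> Z2_4" unfolding Z2_4_def e_def using k a1(1) a2(1) a3(1) by auto
  have "x' = k *\<^sub>R sym2_sign e x"
    unfolding vec6_eq sym2_sign_def e_def k_def a1(2,3) a2(2,3) a3(2,3)
    using s a1(1) a2(1) a3(1) by (elim disjE) simp_all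
  moreover have "k \<noteq> 0" using k by auto
  ultimately show ?thesis using eZ by blast
qed

lemma sqrt4: "(t::real) \<ge> 0 \<Longrightarrow> (sqrt (sqrt t))^4 = t"
proof -
  assume t: "t \<ge> 0"
  have "(sqrt (sqrt t))^4 = ((sqrt (sqrt t))^2)^2" by (simp add: power_mult[symmetric])
  also have "\<dots> = t" using t by simp
  finally show ?thesis .
qed

lemma normalize_Nf:
  assumes "x \<noteq> 0"
  shows "Nf ((1 / sqrt (sqrt (Nf x))) *\<^sub>R x) = 1" "1 / sqrt (sqrt (Nf x)) \<noteq> 0"
proof -
  have p: "Nf x > 0" using Nf_pos[OF assms] .
  show "Nf ((1 / sqrt (sqrt (Nf x))) *\<^sub>R x) = 1"
    unfolding Nf_scale power_one_over sqrt4[OF less_imp_le[OF p]] using p by simp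
  show "1 / sqrt (sqrt (Nf x)) \<noteq> 0" using p by simp
qed

lemma phi_inj:
  assumes "x \<noteq> 0" "x' \<noteq> 0" "phi x = phi x'"
  shows "\<exists>e\<in>Z2_4. \<exists>c. c \<noteq> 0 \<and> x' = c *\<^sub>R sym2_sign e x"
proof -
  define a where "a = 1 / sqrt (sqrt (Nf x))"
  define a' where "a' = 1 / sqrt (sqrt (Nf x'))"
  note na = normalize_Nf[OF assms(1), folded a_def]
  note na' = normalize_Nf[OF assms(2), folded a'_def]
  have "phi (a *\<^sub>R x) = phi (a' *\<^sub>R x')"
    using assms(3) phi_scale na(2) na'(2) by simp
  then obtain e c where e: "e \<in> Z2_4" "c \<noteq> 0" "a' *\<^sub>R x' = c *\<^sub>R sym2_sign e (a *\<^sub>R x)"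
    using phi_inj1[OF na(1) na'(1)] by blast
  have "x' = (1/a') *\<^sub>R (a' *\<^sub>R x')" using na'(2) by simp
  also have "\<dots> = (1/a') *\<^sub>R (c *\<^sub>R sym2_sign e (a *\<^sub>R x))" using e(3) by simp
  also have "\<dots> = (c * a / a') *\<^sub>R sym2_sign e x" by (simp add: sym2_scale)
  finally have "x' = (c * a / a') *\<^sub>R sym2_sign e x" .
  moreover have "c * a / a' \<noteq> 0" using e(2) na(2) na'(2) by simp
  ultimately show ?thesis using e(1) by blast
qed




lemma cont_vector3:
  assumes "continuous_on S a" "continuous_on S b" "continuous_on S c"
  shows "continuous_on S (\<lambda>x. vector [a x, b x, c x] :: real^3)"
proof -
  define F where "F i = (if i = (1::3) then a else if i = 2 then b else c)" for i
  have eq: "(\<lambda>x. vector [a x, b x, c x] :: real^3) = (\<lambda>x. \<chi> i. F i x)"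
    by (rule ext) (simp add: vec_eq_iff forall_3 F_def)
  have "continuous_on S (F i)" for i unfolding F_def using assms by simp
  then show ?thesis unfolding eq by (rule continuous_on_vec_lambda)
qed

lemma cont_Uf: "continuous_on S Uf"
  unfolding Uf_def by (intro cont_vector3 continuous_intros)

lemma cont_Vf: "continuous_on S Vf"
  unfolding Vf_def by (intro cont_vector3 continuous_intros)

lemma cont_outer: "continuous_on S f \<Longrightarrow> continuous_on S (\<lambda>x. outer (f x :: real^'n))"
  unfolding outer_def by (intro continuous_on_vec_lambda continuous_intros)

lemma cont_Nf: "continuous_on S Nf"
  unfolding Nf_def by (intro continuous_intros cont_Uf cont_Vf)

lemma cont_phi: "continuous_on (UNIV - {0}) phi"
proof -
  have "\<forall>x\<in>UNIV - {0}. Nf x \<noteq> 0" using Nf_pos by force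
  then show ?thesis
    unfolding phi_def by (intro continuous_intros cont_Uf cont_Vf cont_Nf cont_outer) auto
qed

definition Sset :: "((real^3) \<times> (real^3^3)) set" where "Sset = phi ` (UNIV - {0})"

definition Phi :: "(real^pair6) set set \<Rightarrow> (real^3) \<times> (real^3^3)" where
  "Phi W = phi (SOME z. z \<in> \<Union>W)"

lemma Phi_orb: assumes "x \<noteq> 0" shows "Phi (orb (qL x)) = phi x"
proof -
  have ex: "x \<in> \<Union>(orb (qL x))" using qL_self orb_self by blast
  have "phi z = phi x" if "z \<in> \<Union>(orb (qL x))" for z
  proof -
    from that obtain g where g: "g \<in> Z2_4" "z \<in> RP5_action g (qL x)" unfolding orb_def by blast
    then have "z \<in> qL (sym2_sign g x)" by (simp add: act_qL)
    then obtain c where "c \<noteq> 0" "z = c *\<^sub>R sym2_sign g x" using qL_mem by blast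
    then show ?thesis using phi_scale phi_sym g(1) by simp
  qed
  then show ?thesis unfolding Phi_def using someI[of "\<lambda>z. z \<in> \<Union>(orb (qL x))", OF ex] by blast
qed

lemma topspace_O: "topspace (orbit_space projective_space RP5_action Z2_4) = orb ` qL ` (UNIV - {0})"
  by (simp add: orbit_eq topspace_quotient topspace_proj)

lemma O_homeo: "orbit_space (projective_space :: (real^pair6) set topology) RP5_action Z2_4
   homeomorphic_space top_of_set Sset"
proof -
  let ?O = "orbit_space (projective_space :: (real^pair6) set topology) RP5_action Z2_4"
  have c0: "continuous_map (top_of_set (UNIV - {0})) (top_of_set Sset) phi"
    unfolding continuous_map_in_subtopology using cont_phi by (auto simp: Sset_def)
  have c1: "continuous_map projective_space (top_of_set Sset) (\<lambda>L. Phi (orb L))"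
    unfolding proj_eq by (rule cont_quot[OF c0]) (simp add: Phi_orb)
  have c2: "continuous_map ?O (top_of_set Sset) Phi"
    unfolding orbit_eq by (rule cont_quot[OF c1]) simp
  have cp: "compact_space ?O" unfolding orbit_eq by (intro compact_quot compact_proj)
  have H: "Hausdorff_space (top_of_set Sset)"
    by (rule Hausdorff_space_subtopology) simp
  have im: "Phi ` topspace ?O = topspace (top_of_set Sset)"
    unfolding topspace_O Sset_def image_image using Phi_orb by auto
  have inj: "inj_on Phi (topspace ?O)"
  proof (rule inj_onI)
    fix o1 o2 assume "o1 \<in> topspace ?O" "o2 \<in> topspace ?O" and eq: "Phi o1 = Phi o2"
    then obtain x x' where x: "x \<noteq> 0" "o1 = orb (qL x)" and x': "x' \<noteq> 0" "o2 = orb (qL x')"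
      unfolding topspace_O by blast
    have "phi x = phi x'" using eq x x' Phi_orb by simp
    then obtain e c where e: "e \<in> Z2_4" "c \<noteq> 0" "x' = c *\<^sub>R sym2_sign e x"
      using phi_inj[OF x(1) x'(1)] by blast
    then have "qL x' = RP5_action e (qL x)" by (simp add: qL_scale act_qL)
    then show "o1 = o2" using x x' orb_act[OF e(1)] by simp
  qed
  show ?thesis
    by (rule homeomorphic_map_imp_homeomorphic_space, rule continuous_imp_homeomorphic_map[OF c2 cp H im inj])
qed




definition pr :: "real^3 \<Rightarrow> real^3^3" where "pr w = (1 / (w \<bullet> w)) *\<^sub>R outer w"
definition Pm :: "(real^3) set \<Rightarrow> real^3^3" where "Pm L = pr (SOME w. w \<in> L)"

lemma pr_scale: "c \<noteq> 0 \<Longrightarrow> pr (c *\<^sub>R w) = pr w"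
  by (simp add: pr_def outer_scale power2_eq_square)

lemma Pm_qL: "Pm (qL w) = pr w"
proof -
  have "pr z = pr w" if "z \<in> qL w" for z
    using qL_mem[OF that] pr_scale by auto
  then show ?thesis unfolding Pm_def using someI[of "\<lambda>z. z \<in> qL w", OF qL_self] by blast
qed

lemma cont_pr: "continuous_on (UNIV - {0}) pr"
proof -
  have "\<forall>x\<in>UNIV - {0::real^3}. x \<bullet> x \<noteq> 0" by simp
  then show ?thesis unfolding pr_def by (intro continuous_intros cont_outer) auto
qed

abbreviation "RP2 \<equiv> (projective_space :: (real^3) set topology)"
abbreviation "S2 \<equiv> top_of_set (sphere (0::real^3) 1)"
abbreviation "I01 \<equiv> top_of_set {0..1::real}"

lemma cm_Pm: "continuous_map RP2 euclidean Pm"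
  unfolding proj_eq by (rule cont_quot[where g = pr]) (simp_all add: cont_pr Pm_qL)

lemma cm_pair: "continuous_map X euclidean f \<Longrightarrow> continuous_map X euclidean g \<Longrightarrow>
   continuous_map X euclidean (\<lambda>x. (f x, g x))"
  using continuous_map_pairedI[of X euclidean f euclidean g] by simp

lemma cm_scaleR: "continuous_map X euclideanreal a \<Longrightarrow> continuous_map X euclidean f \<Longrightarrow>
   continuous_map X euclidean (\<lambda>x. a x *\<^sub>R (f x :: 'b::real_normed_vector))"
  by (simp add: continuous_map_atin tendsto_scaleR)

definition hj :: "(real^3) \<times> (real^3) set \<times> real \<Rightarrow> (real^3) \<times> (real^3^3)" where
  "hj p = ((1 - snd (snd p)) *\<^sub>R fst p, snd (snd p) *\<^sub>R Pm (fst (snd p)))"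

lemma cm_hj: "continuous_map (prod_topology S2 (prod_topology RP2 I01)) euclidean hj"
proof -
  let ?B = "prod_topology S2 (prod_topology RP2 I01)"
  have i1: "continuous_map S2 euclidean id" by simp
  have i2: "continuous_map I01 euclidean id" by simp
  have cy: "continuous_map ?B euclidean fst"
    using continuous_map_compose[OF continuous_map_fst i1] by (simp add: o_def)
  have cs: "continuous_map ?B (prod_topology RP2 I01) snd" by (rule continuous_map_snd)
  have ct: "continuous_map ?B euclideanreal (\<lambda>p. snd (snd p))"
    using continuous_map_compose[OF cs continuous_map_compose[OF continuous_map_snd i2]] by (simp add: o_def)
  have cP: "continuous_map ?B euclidean (\<lambda>p. Pm (fst (snd p)))"
    using continuous_map_compose[OF cs continuous_map_compose[OF continuous_map_fst cm_Pm]] by (simp add: o_def)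
  have c1: "continuous_map ?B euclideanreal (\<lambda>p. 1 - snd (snd p))"
    by (intro continuous_map_diff ct continuous_map_canonical_const)
  show ?thesis unfolding hj_def
    by (intro cm_pair cm_scaleR c1 cy ct cP)
qed

lemma outer_mult: "outer u *v v = (u \<bullet> v) *\<^sub>R u"
  by (simp add: outer_def matrix_vector_mult_def inner_vec_def vec_eq_iff sum_distrib_left sum_distrib_right algebra_simps)

lemma pr_inj: assumes "w \<noteq> 0" "w' \<noteq> 0" "pr w = pr w'" shows "qL w = qL w'"
proof -
  have "pr w *v w = w" using assms(1) by (simp add: pr_def scaleR_matrix_vector_assoc[symmetric] outer_mult)
  then have "w = pr w' *v w" using assms(3) by simp
  also have "\<dots> = ((w' \<bullet> w) / (w' \<bullet> w')) *\<^sub>R w'" by (simp add: pr_def scaleR_matrix_vector_assoc[symmetric] outer_mult)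
  finally have w: "w = ((w' \<bullet> w) / (w' \<bullet> w')) *\<^sub>R w'" .
  then have "(w' \<bullet> w) / (w' \<bullet> w') \<noteq> 0" using assms(1) by (metis scaleR_zero_left)
  then show ?thesis using w by (metis qL_scale)
qed




abbreviation "BB \<equiv> prod_topology S2 (prod_topology RP2 I01)"

lemma topspace_BB: "topspace BB = sphere 0 1 \<times> (qL ` (UNIV - {0}) \<times> {0..1})"
  by (simp add: topspace_proj)

lemma jc_eq: "join_class S2 RP2 (y, L, t) =
   (if t = 0 then {(y, L', 0) | L'. L' \<in> qL ` (UNIV - {0})}
    else if t = 1 then {(y', L, 1) | y'. y' \<in> sphere 0 1} else {(y, L, t)})"
  unfolding join_class_def by (simp add: topspace_proj)

lemma exists_sq: "\<exists>p q::real. p^2 - q^2 = v \<and> 2 * p * q = u"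
proof -
  define z where "z = csqrt (Complex v u)"
  have "z^2 = Complex v u" unfolding z_def by simp
  then have "Re (z^2) = v" "Im (z^2) = u" by simp_all
  then show ?thesis unfolding Re_power2 Im_power2 by blast
qed

lemma hj_in: assumes "p \<in> topspace BB" shows "hj p \<in> Sset"
proof -
  obtain y L t where p: "p = (y, L, t)" by (cases p) auto
  from assms obtain w where y: "norm y = 1" and w: "w \<noteq> 0" "L = qL w" and t: "0 \<le> t" "t \<le> 1"
    unfolding topspace_BB p by auto
  define w1 where "w1 = (1 / norm w) *\<^sub>R w"
  have nw1: "norm w1 = 1" unfolding w1_def using w by simp
  have prw: "pr w = outer w1"
  proof -
    have "pr w = pr w1" unfolding w1_def using w by (simp add: pr_scale)
    also have "w1 \<bullet> w1 = 1" using nw1 by (simp add: power2_norm_eq_inner[symmetric])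
    then have "pr w1 = outer w1" by (simp add: pr_def)
    finally show ?thesis .
  qed
  define U where "U = sqrt t *\<^sub>R w1"
  define V where "V = sqrt (1 - t) *\<^sub>R y"
  obtain p1 q1 where 1: "p1^2 - q1^2 = V$1" "2 * p1 * q1 = U$1" using exists_sq by blast
  obtain p2 q2 where 2: "p2^2 - q2^2 = V$2" "2 * p2 * q2 = U$2" using exists_sq by blast
  obtain p3 q3 where 3: "p3^2 - q3^2 = V$3" "2 * p3 * q3 = U$3" using exists_sq by blast
  define x :: "real^pair6" where
    "x = (\<chi> k. case k of P12 \<Rightarrow> p1 | P34 \<Rightarrow> q1 | P13 \<Rightarrow> p2 | P24 \<Rightarrow> q2 | P14 \<Rightarrow> p3 | P23 \<Rightarrow> q3)"
  have Ux: "Uf x = U" unfolding Uf_def x_def vec_eq_iff forall_3 using 1 2 3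
    by (simp add: mult.assoc)
  have Vx: "Vf x = V" unfolding Vf_def x_def vec_eq_iff forall_3 using 1 2 3 by simp
  have nU: "(norm U)^2 = t" unfolding U_def using nw1 t by (simp add: power_mult_distrib)
  have nV: "norm V = sqrt (1 - t)" unfolding V_def using y t by simp
  have N1: "Nf x = 1" unfolding Nf_def Ux Vx nU nV using t by simp
  have x0: "x \<noteq> 0"
  proof
    assume "x = 0" then have "Nf x = 0" by (simp add: Nf_expand)
    with N1 show False by simp
  qed
  have "phi x = (norm V *\<^sub>R V, outer U)" unfolding phi_def N1 Ux Vx by simp
  also have "\<dots> = hj p"
    unfolding hj_def p w(2) nV U_def V_def outer_scale using t y by (simp add: Pm_qL prw)
  finally show ?thesis unfolding Sset_def using x0 by (metis DiffI UNIV_I image_eqI singletonD)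
qed




lemma phi_in: assumes "x \<noteq> 0" shows "phi x \<in> hj ` topspace BB"
proof -
  define U where "U = Uf x"
  define V where "V = Vf x"
  define N where "N = Nf x"
  have Np: "N > 0" unfolding N_def using Nf_pos[OF assms] .
  have Ndef: "N = (norm U)^2 + (norm V)^2" unfolding N_def U_def V_def Nf_def ..
  define t where "t = (norm U)^2 / N"
  define y where "y = (if V = 0 then axis 1 1 else (1 / norm V) *\<^sub>R V)"
  define w where "w = (if U = 0 then axis 1 (1::real) else U)"
  have t01: "0 \<le> t" "t \<le> 1" unfolding t_def using Np Ndef by (simp_all add: field_simps)
  have ny: "norm y = 1" unfolding y_def by simp
  have w0: "w \<noteq> 0" unfolding w_def by (simp add: axis_eq_0_iff)
  have pin: "(y, qL w, t) \<in> topspace BB" unfolding topspace_BB using t01 ny w0 by auto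
  have "1 - t = (N - (norm U)^2) / N" unfolding t_def using Np by (simp add: diff_divide_distrib)
  also have "N - (norm U)^2 = (norm V)^2" using Ndef by simp
  finally have omt: "1 - t = (norm V)^2 / N" .
  have e1: "(1 - t) *\<^sub>R y = (norm V / N) *\<^sub>R V"
  proof (cases "V = 0")
    case True
    then have "1 - t = 0" using omt by simp
    then show ?thesis using True by simp
  next
    case False then show ?thesis unfolding y_def omt by (simp add: power2_eq_square)
  qed
  have e2: "t *\<^sub>R Pm (qL w) = (1 / N) *\<^sub>R outer U"
  proof (cases "U = 0")
    case True then show ?thesis unfolding t_def by (simp add: outer_def vec_eq_iff)
  next
    case False
    then have "U \<bullet> U \<noteq> 0" by simp
    then show ?thesis unfolding w_def t_def using False
      by (simp add: Pm_qL pr_def power2_norm_eq_inner)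
  qed
  have "hj (y, qL w, t) = phi x"
    unfolding hj_def phi_def using e1 e2 by (simp add: U_def V_def N_def)
  then show ?thesis using pin by (metis image_eqI)
qed

lemma Pm_inj: assumes "L \<in> qL ` (UNIV - {0})" "L' \<in> qL ` (UNIV - {0})" "Pm L = Pm L'" shows "L = L'"
proof -
  obtain w w' where w: "w \<noteq> 0" "L = qL w" "w' \<noteq> 0" "L' = qL w'" using assms(1,2) by blast
  have "pr w = pr w'" using assms(3) unfolding w(2,4) Pm_qL .
  then have "qL w = qL w'" by (rule pr_inj[OF w(1) w(3)])
  then show ?thesis unfolding w(2,4) .
qed

lemma class_inj:
  assumes p: "p \<in> topspace BB" and p': "p' \<in> topspace BB" and eq: "hj p = hj p'"
  shows "join_class S2 RP2 p = join_class S2 RP2 p'"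
proof -
  obtain y L t where pe: "p = (y, L, t)" by (cases p) auto
  obtain y' L' t' where pe': "p' = (y', L', t')" by (cases p') auto
  have y: "norm y = 1" "L \<in> qL ` (UNIV - {0})" "0 \<le> t" "t \<le> 1" using p unfolding pe topspace_BB by auto
  have y': "norm y' = 1" "L' \<in> qL ` (UNIV - {0})" "0 \<le> t'" "t' \<le> 1" using p' unfolding pe' topspace_BB by auto
  have e1: "(1 - t) *\<^sub>R y = (1 - t') *\<^sub>R y'" and e2: "t *\<^sub>R Pm L = t' *\<^sub>R Pm L'"
    using eq unfolding hj_def pe pe' by simp_all
  have "norm ((1 - t) *\<^sub>R y) = norm ((1 - t') *\<^sub>R y')" using e1 by simp
  then have tt: "t' = t" using y y' by simp
  show ?thesis
  proof (cases "t = 0")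
    case True
    then have "y = y'" using e1 tt by simp
    then show ?thesis unfolding pe pe' jc_eq using tt True by simp
  next
    case f0: False
    show ?thesis
    proof (cases "t = 1")
      case True
      then have "Pm L = Pm L'" using e2 tt by simp
      then have "L = L'" by (rule Pm_inj[OF y(2) y'(2)])
      then show ?thesis unfolding pe pe' jc_eq using tt True by simp
    next
      case False
      then have yy: "y = y'" using e1 tt by simp
      have "Pm L = Pm L'" using e2 tt f0 by simp
      then have "L = L'" by (rule Pm_inj[OF y(2) y'(2)])
      with yy show ?thesis unfolding pe pe' using tt by simp
    qed
  qed
qed




definition Hj :: "((real^3) \<times> (real^3) set \<times> real) set \<Rightarrow> (real^3) \<times> (real^3^3)" where
  "Hj W = hj (SOME p. p \<in> W)"

lemma Hj_class: assumes p: "p \<in> topspace BB" shows "Hj (join_class S2 RP2 p) = hj p"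
proof -
  obtain y L t where pe: "p = (y, L, t)" by (cases p) auto
  have y: "norm y = 1" "L \<in> qL ` (UNIV - {0})" "0 \<le> t" "t \<le> 1" using p unfolding pe topspace_BB by auto
  have mem: "p \<in> join_class S2 RP2 p" unfolding pe jc_eq using y by auto
  have "hj q = hj p" if q: "q \<in> join_class S2 RP2 p" for q
  proof (cases "t = 0")
    case True
    then obtain L' where "q = (y, L', 0)" using q unfolding pe jc_eq by auto
    then show ?thesis unfolding pe hj_def using True by simp
  next
    case f0: False
    show ?thesis
    proof (cases "t = 1")
      case True
      then obtain y' where "q = (y', L, 1)" using q f0 unfolding pe jc_eq by auto
      then show ?thesis unfolding pe hj_def using True by simp
    next
      case False
      then have "q = p" using q f0 unfolding pe jc_eq by simp
      then show ?thesis by simp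
    qed
  qed
  then show ?thesis unfolding Hj_def using someI[of "\<lambda>q. q \<in> join_class S2 RP2 p", OF mem] by blast
qed

lemma J_homeo: "join_space S2 RP2 homeomorphic_space top_of_set Sset"
proof -
  let ?J = "join_space S2 RP2"
  have jeq: "?J = quotient_topology BB (join_class S2 RP2)" unfolding join_space_def ..
  have c0: "continuous_map BB (top_of_set Sset) hj"
    unfolding continuous_map_in_subtopology using cm_hj hj_in by auto
  have c2: "continuous_map ?J (top_of_set Sset) Hj"
    unfolding jeq by (rule cont_quot[OF c0]) (simp add: Hj_class)
  have cpB: "compact_space BB"
    by (simp add: compact_space_prod_topology compact_proj compact_space_subtopology compactin_subtopology)
  have cp: "compact_space ?J" unfolding jeq by (intro compact_quot cpB)
  have H: "Hausdorff_space (top_of_set Sset)"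
    by (rule Hausdorff_space_subtopology) simp
  have tJ: "topspace ?J = join_class S2 RP2 ` topspace BB" unfolding jeq topspace_quotient ..
  have im: "Hj ` topspace ?J = topspace (top_of_set Sset)"
  proof -
    have "Hj ` topspace ?J = hj ` topspace BB" unfolding tJ image_image using Hj_class by auto
    also have "\<dots> = Sset"
    proof
      show "hj ` topspace BB \<subseteq> Sset" using hj_in by auto
      show "Sset \<subseteq> hj ` topspace BB" unfolding Sset_def by (rule image_subsetI) (rule phi_in, simp)
    qed
    finally show ?thesis by simp
  qed
  have inj: "inj_on Hj (topspace ?J)"
  proof (rule inj_onI)
    fix a b assume "a \<in> topspace ?J" "b \<in> topspace ?J" and eq: "Hj a = Hj b"
    then obtain p p' where "p \<in> topspace BB" "a = join_class S2 RP2 p" "p' \<in> topspace BB" "b = join_class S2 RP2 p'"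
      unfolding tJ by blast
    then have ab: "p \<in> topspace BB" "a = join_class S2 RP2 p" "p' \<in> topspace BB" "b = join_class S2 RP2 p'" .
    have "hj p = hj p'" using eq unfolding ab(2,4) Hj_class[OF ab(1)] Hj_class[OF ab(3)] .
    then show "a = b" unfolding ab(2,4) by (rule class_inj[OF ab(1) ab(3)])
  qed
  show ?thesis
    by (rule homeomorphic_map_imp_homeomorphic_space, rule continuous_imp_homeomorphic_map[OF c2 cp H im inj])
qed

theorem mainTheorem18:
  shows "orbit_space (projective_space :: (real^pair6) set topology) RP5_action Z2_4
           homeomorphic_space
         join_space (top_of_set (sphere (0::real^3) 1)) (projective_space :: (real^3) set topology)"
  using homeomorphic_space_trans[OF O_homeo homeomorphic_space_sym[THEN iffD1, OF J_homeo]] .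


end
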